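(* There exist $0\le a<c$ and $\Delta q>0$ such that, when $1/b$ is uniformly distributed on $[a,c]$, $$\frac{\mathbb E(1/b)}{M'_{1/b}(-\Delta q)}<M_{1/b}(\Delta q),$$ i.e. the R$^2$DP Laplace mechanism with uniformly distributed $1/b$ can satisfy the necessary condition for improving on the Laplace mechanism.
   Context: $M_{1/b}(t)=\mathbb E[e^{t/b}]$ is the moment generating function of $1/b$ and $M'_{1/b}$ its derivative; for the uniform distribution on $[a,c]$, $M(t)=\frac{e^{tc}-e^{ta}}{t(c-a)}$ for $t\neq0$ and $M(0)=1$. The R$^2$DP Laplace mechanism adds $\mathrm{Lap}(b)$ noise (density $\frac1{2b}e^{-|x|/b}$) with random scale $b$ to a query of sensitivity $\Delta q$. *)

theory Defs
  imports "HOL-Probability.Probability"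
begin

definition mgf :: "real measure \<Rightarrow> real \<Rightarrow> real" where
  "mgf D t = (\<integral>x. exp (t * x) \<partial>D)"

definition unif :: "real \<Rightarrow> real \<Rightarrow> real measure" where
  "unif a c = uniform_measure lborel {a..c}"

end

theory Submission
  imports Defs
begin

lemma unif01: "unif 0 1 = density lborel (\<lambda>x. ennreal (indicator {0..1::real} x))"
  unfolding unif_def uniform_measure_def
  by (simp add: emeasure_lborel_Icc ennreal_indicator divide_ennreal_def)

lemma int01:
  fixes g :: "real \<Rightarrow> real"
  assumes "g \<in> borel_measurable borel"
  shows "integral\<^sup>L (unif 0 1) g = integral\<^sup>L lborel (\<lambda>x. indicator {0..1::real} x *\<^sub>R g x)"
proof -
  have m: "g \<in> borel_measurable lborel" using assms by simp
  show ?thesis unfolding unif01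
    by (rule integral_density[OF m]) auto
qed

lemma mean01: "(\<integral>x. x \<partial>(unif 0 1)) = 1/2"
proof -
  have "(\<integral>x. x \<partial>(unif 0 1)) = integral\<^sup>L lborel (\<lambda>x. indicator {0..1::real} x *\<^sub>R x)"
    by (rule int01) simp
  also have "\<dots> = (\<lambda>x. x^2/2) 1 - (\<lambda>x. x^2/2) (0::real)"
    by (rule integral_FTC_atLeastAtMost)
       (auto intro!: derivative_eq_intros continuous_intros simp: has_real_derivative_iff_has_vector_derivative[symmetric])
  finally show ?thesis by simp
qed

lemma mgf01:
  assumes "t \<noteq> 0"
  shows "mgf (unif 0 1) t = (exp t - 1) / t"
proof -
  have "mgf (unif 0 1) t = integral\<^sup>L lborel (\<lambda>x. indicator {0..1::real} x *\<^sub>R exp (t * x))"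
    unfolding mgf_def by (rule int01) simp
  also have "\<dots> = (\<lambda>x. exp (t * x) / t) 1 - (\<lambda>x. exp (t * x) / t) (0::real)"
    by (rule integral_FTC_atLeastAtMost)
       (auto intro!: derivative_eq_intros continuous_intros simp: assms has_real_derivative_iff_has_vector_derivative[symmetric])
  finally show ?thesis by (simp add: diff_divide_distrib)
qed

theorem lemmaB2:
  shows "\<exists>a c dq :: real. 0 \<le> a \<and> a < c \<and> dq > 0 \<and>
     (\<exists>M'. (mgf (unif a c) has_real_derivative M') (at (- dq)) \<and>
        (\<integral>x. x \<partial>(unif a c)) / M' < mgf (unif a c) dq)"
proof (intro exI conjI)
  let ?f = "\<lambda>t::real. (exp t - 1) / t"
  let ?D = "(exp (-10) * (-10) - (exp (-10) - 1)) / ((-10::real) * (-10))"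
  have d: "(?f has_real_derivative ?D) (at (-10))"
    by (auto intro!: derivative_eq_intros)
  show "(mgf (unif 0 1) has_real_derivative ?D) (at (- 10))"
    by (rule has_field_derivative_transform_within_open[OF d, of "{..<0}"]) (auto simp: mgf01)
  have E: "exp (10::real) \<ge> 1024"
  proof -
    have "exp (10::real) = exp 1 ^ 10" by (simp add: exp_of_nat_mult[symmetric])
    moreover have "(2::real) \<le> exp 1" using exp_ge_add_one_self[of 1] by simp
    ultimately show ?thesis using power_mono[of 2 "exp (1::real)" 10] by simp
  qed
  have "(1/2) / ?D < ?f 10"
  proof -
    define E where "E = exp (10::real)"
    have em: "exp (-10::real) = 1 / E" by (simp add: E_def exp_minus field_simps)
    have E1: "E \<ge> 1024" using E E_def by simp
    have "?D = (E - 11) / (100 * E)" using E1 by (simp add: em field_simps)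
    moreover have "(1/2) / ((E - 11) / (100 * E)) < (E - 1) / 10"
    proof -
      have p: "E - 11 > 0" using E1 by simp
      have "(1/2) / ((E - 11) / (100 * E)) = 50 * E / (E - 11)" using p by (simp add: field_simps)
      also have "\<dots> < (E - 1) / 10"
        using p E1 mult_mono[of 1024 E 512 "E - 512"] by (simp add: field_simps algebra_simps)
      finally show ?thesis .
    qed
    moreover have "?f 10 = (E - 1) / 10" by (simp add: E_def)
    ultimately show ?thesis by (simp only:)
  qed
  then show "(\<integral>x. x \<partial>(unif 0 1)) / ?D < mgf (unif 0 1) 10"
    by (simp add: mean01 mgf01)
qed simp_all

end
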